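(* Assume that the distribution of $Z$ is aperiodic (the greatest common divisor of its support is $1$), that $\mathbb{E} Z=\infty$, and that $\mathbb{E}\min(Z,W)<\infty$. Then $\Lambda_n\to\infty$ almost surely as $n\to\infty$.
   Context: Let $Z,W,(Z_n)_{n\ge1},(W_n)_{n\ge1}$ be independent, identically distributed random variables taking values in $\mathbb{N}=\{1,2,3,\dots\}$. Define sets $T_n\subset\mathbb{Z}$ recursively by $T_n=\{n\}$ for $n\le 0$ and $T_n=\{n\}\cup T_{n-Z_n}\cup T_{n-W_n}$ for $n\ge1$. Let $\mathcal{L}_n=T_n\cap\{0,-1,-2,\dots\}$ and $\Lambda_n=|\mathcal{L}_n|$. *)

theory Defs
  imports "HOL-Probability.Probability"
begin

text \<open>The random tree sets T_n, for a fixed sample path: z k = Z_k, w k = W_k.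
  T_n = {n} for n <= 0, and T_n = {n} \<union> T_(n - Z_n) \<union> T_(n - W_n) for n >= 1.
  The values Z_k, W_k lie in {1,2,...}; the "max 1" only ensures termination of the
  recursion and is the identity on such values.\<close>

function Tset :: "(nat \<Rightarrow> nat) \<Rightarrow> (nat \<Rightarrow> nat) \<Rightarrow> int \<Rightarrow> int set" where
  "Tset z w n =
     (if n \<le> 0 then {n}
      else {n} \<union> Tset z w (n - int (max 1 (z (nat n))))
               \<union> Tset z w (n - int (max 1 (w (nat n)))))"
  by auto
termination
  by (relation "Wellfounded.measure (\<lambda>(z, w, n). nat n)") auto

declare Tset.simps [simp del]

definition Lambda :: "(nat \<Rightarrow> nat) \<Rightarrow> (nat \<Rightarrow> nat) \<Rightarrow> int \<Rightarrow> nat" where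
  "Lambda z w n = card (Tset z w n \<inter> {..0})"

end

theory Submission
  imports Defs
begin


inductive_set sgp :: "nat set \<Rightarrow> nat set" for S where
  sgp0: "0 \<in> sgp S"
| sgpS: "x \<in> sgp S \<Longrightarrow> d \<in> S \<Longrightarrow> x + d \<in> sgp S"

lemma sgp_add0: "y \<in> sgp S \<Longrightarrow> x \<in> sgp S \<Longrightarrow> x + y \<in> sgp S"
proof (induction y rule: sgp.induct)
  case sgp0 then show ?case by simp
next
  case (sgpS y d) then show ?case by (metis add.assoc sgp.sgpS)
qed

lemma sgp_add: "x \<in> sgp S \<Longrightarrow> y \<in> sgp S \<Longrightarrow> x + y \<in> sgp S"
  using sgp_add0 by blast

lemma sgp_mult: "x \<in> sgp S \<Longrightarrow> k * x \<in> sgp S"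
  by (induction k) (auto intro: sgp_add sgp0)

lemma sgp_S: "d \<in> S \<Longrightarrow> d \<in> sgp S"
  using sgpS[OF sgp0] by simp

lemma sgp_consec:
  assumes g: "Gcd S = (1::nat)" and z: "0 \<notin> S"
  shows "\<exists>a. a \<in> sgp S \<and> a + 1 \<in> sgp S"
proof -
  let ?D = "{d. d > 0 \<and> (\<exists>a. a \<in> sgp S \<and> a + d \<in> sgp S)}"
  have "S \<noteq> {}" using g by auto
  then obtain x where x: "x \<in> S" by auto
  with z have "x > 0" by (cases x) auto
  hence "x \<in> ?D" using x sgp0[of S] sgp_S[OF x] by auto
  define d where "d = Least (\<lambda>d. d \<in> ?D)"
  have dD: "d \<in> ?D" unfolding d_def by (rule LeastI[of _ x]) fact
  have dmin: "\<And>e. e \<in> ?D \<Longrightarrow> d \<le> e" unfolding d_def by (rule Least_le)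
  from dD obtain a where a: "a \<in> sgp S" "a + d \<in> sgp S" and dpos: "d > 0" by auto
  have "d dvd y" if y: "y \<in> S" for y
  proof (rule ccontr)
    assume nd: "\<not> d dvd y"
    define q where "q = y div d"
    define r where "r = y mod d"
    have yqr: "y = q * d + r" unfolding q_def r_def by simp
    have r0: "r > 0" using nd unfolding r_def by (simp add: dvd_eq_mod_eq_0)
    have rd: "r < d" unfolding r_def using dpos by simp
    have e1: "(q+1) * a + y \<in> sgp S" using sgp_add[OF sgp_mult[OF a(1)] sgp_S[OF y]] .
    have e2: "(q+1) * (a + d) \<in> sgp S" using sgp_mult[OF a(2)] .
    have eq: "(q+1) * (a + d) = ((q+1) * a + y) + (d - r)"
      using yqr rd by (simp add: algebra_simps)
    have "d - r \<in> ?D" using e1 e2 eq r0 rd by (intro CollectI conjI exI[of _ "(q+1) * a + y"]) auto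
    with dmin have "d \<le> d - r" by blast
    with r0 rd show False by simp
  qed
  hence "d dvd Gcd S" by (intro Gcd_greatest) auto
  with g have "d = 1" by simp
  with a show ?thesis by auto
qed

lemma sgp_large:
  assumes g: "Gcd S = (1::nat)" and z: "0 \<notin> S"
  shows "\<exists>N0. \<forall>n\<ge>N0. n \<in> sgp S"
proof -
  obtain a where a: "a \<in> sgp S" "a + 1 \<in> sgp S" using sgp_consec[OF g z] by blast
  show ?thesis
  proof (intro exI allI impI)
    fix n assume n: "n \<ge> a * a"
    show "n \<in> sgp S"
    proof (cases "a = 0")
      case True then show ?thesis using sgp_mult[OF a(2), of n] by simp
    next
      case False
      define q where "q = n div a"
      define r where "r = n mod a"
      have nqr: "n = q * a + r" unfolding q_def r_def by simp
      have ra: "r < a" unfolding r_def using False by simp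
      have qa: "q \<ge> a" unfolding q_def using n False
        by (metis div_le_mono nonzero_mult_div_cancel_right)
      have "n = (q - r) * a + r * (a + 1)" using nqr ra qa
        by (simp add: algebra_simps diff_mult_distrib)
      moreover have "(q - r) * a + r * (a + 1) \<in> sgp S"
        by (intro sgp_add sgp_mult a)
      ultimately show ?thesis by simp
    qed
  qed
qed

lemma sgp_dec:
  assumes "j \<in> sgp S" "j > 0"
  shows "\<exists>d. d \<in> S \<and> d \<le> j \<and> j - d \<in> sgp S"
  using assms by (cases rule: sgp.cases) auto



lemma Tset_self: "n \<in> Tset z w n"
  by (subst Tset.simps) auto

lemma Tset_childz: "n > 0 \<Longrightarrow> Tset z w (n - int (max 1 (z (nat n)))) \<subseteq> Tset z w n"
  by (subst (2) Tset.simps) auto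

lemma Tset_childw: "n > 0 \<Longrightarrow> Tset z w (n - int (max 1 (w (nat n)))) \<subseteq> Tset z w n"
  by (subst (2) Tset.simps) auto

lemma Tset_finite: "finite (Tset z w n)"
proof (induction z w n rule: Tset.induct)
  case (1 z w n) then show ?case by (subst Tset.simps) auto
qed

lemma Tset_trans: "x \<in> Tset z w n \<Longrightarrow> Tset z w x \<subseteq> Tset z w n"
proof (induction z w n rule: Tset.induct)
  case (1 z w n)
  show ?case
  proof (cases "n \<le> 0")
    case True with 1(3) show ?thesis by (subst (asm) Tset.simps) auto
  next
    case False
    with 1(3) have "x = n \<or> x \<in> Tset z w (n - int (max 1 (z (nat n)))) \<or> x \<in> Tset z w (n - int (max 1 (w (nat n))))"
      by (subst (asm) Tset.simps) auto
    then show ?thesis using 1(1,2) False Tset_childz[of n z w] Tset_childw[of n z w] by auto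
  qed
qed

lemma reach_lemma:
  fixes z w :: "nat \<Rightarrow> nat" and S :: "nat set" and zs :: "nat \<Rightarrow> nat"
  assumes zpos: "\<And>t. z t \<ge> 1" and wpos: "\<And>t. w t \<ge> 1"
    and NN: "\<And>n. n \<ge> NN \<Longrightarrow> n \<in> sgp S"
    and zs: "\<And>j. j \<in> sgp S \<Longrightarrow> j > 0 \<Longrightarrow> zs j \<ge> 1 \<and> zs j \<le> j \<and> j - zs j \<in> sgp S"
    and conf: "\<And>j. 0 < j \<Longrightarrow> j < NN + r \<Longrightarrow> j \<in> sgp S \<Longrightarrow> z (s + j) = zs j"
    and tail: "\<And>t. t \<ge> s + NN + r \<Longrightarrow> min (z t) (w t) \<le> t - (s + NN)"
    and m: "m \<ge> s + NN" and s1: "s \<ge> 1"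
  shows "int s \<in> Tset z w (int m)"
proof -
  have A: "int s \<in> Tset z w (int (s + j))" if "j < NN + r" "j \<in> sgp S" for j
    using that
  proof (induction j rule: less_induct)
    case (less j)
    show ?case
    proof (cases "j = 0")
      case True then show ?thesis by (simp add: Tset_self)
    next
      case False
      hence jp: "j > 0" by simp
      from zs[OF less(3) jp] have d: "zs j \<ge> 1" "zs j \<le> j" "j - zs j \<in> sgp S" by auto
      have zz: "z (s + j) = zs j" using conf[OF jp less(2) less(3)] .
      have IH: "int s \<in> Tset z w (int (s + (j - zs j)))"
        using less(1)[of "j - zs j"] d less(2) jp by auto
      have eq: "int (s + j) - int (max 1 (z (nat (int (s + j))))) = int (s + (j - zs j))"
        using zz d by (simp only: nat_int)
      have "Tset z w (int (s + j) - int (max 1 (z (nat (int (s + j)))))) \<subseteq> Tset z w (int (s + j))"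
        by (rule Tset_childz) (use jp in simp)
      hence "Tset z w (int (s + (j - zs j))) \<subseteq> Tset z w (int (s + j))"
        by (simp only: eq)
      with IH show ?thesis by auto
    qed
  qed
  show ?thesis using m
  proof (induction m rule: less_induct)
    case (less m)
    show ?case
    proof (cases "m < s + NN + r")
      case True
      then have "m - s < NN + r" "m - s \<in> sgp S" using less(2) NN by auto
      from A[OF this] less(2) show ?thesis by (simp add: le_add_diff_inverse)
    next
      case False
      hence mt: "min (z m) (w m) \<le> m - (s + NN)" using tail by simp
      have mp: "int m > 0" using False s1 by simp
      show ?thesis
      proof (cases "z m \<le> w m")
        case True
        hence c: "m - z m \<ge> s + NN" "m - z m < m" using mt zpos[of m] False by auto
        have eq: "int m - int (max 1 (z (nat (int m)))) = int (m - z m)"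
          using zpos[of m] c mt True by (auto simp: of_nat_diff min_def split: if_splits)
        show ?thesis using less(1)[OF c(2) c(1)] Tset_childz[OF mp, of z w] eq by auto
      next
        case False
        hence c: "m - w m \<ge> s + NN" "m - w m < m" using mt wpos[of m] \<open>\<not> m < s + NN + r\<close> by auto
        have eq: "int m - int (max 1 (w (nat (int m)))) = int (m - w m)"
          using wpos[of m] c mt False by (auto simp: of_nat_diff min_def split: if_splits)
        show ?thesis using less(1)[OF c(2) c(1)] Tset_childw[OF mp, of z w] eq by auto
      qed
    qed
  qed
qed

lemma final_lemma:
  fixes z w :: "nat \<Rightarrow> nat"
  assumes zpos: "\<And>t. z t \<ge> 1"
    and inf: "infinite {s. P s}"
    and Pgood: "\<And>s. P s \<Longrightarrow> z s \<ge> s \<and> s \<ge> 1 \<and> (\<forall>m\<ge>s + c. int s \<in> Tset z w (int m))"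
    and fin: "\<And>u. finite {s. z s = s + u}"
  shows "filterlim (\<lambda>n::nat. Lambda z w (int n)) at_top sequentially"
proof -
  have ex: "\<exists>Q. finite Q \<and> Q \<subseteq> {s. P s} \<and> card ((\<lambda>s. z s - s) ` Q) = K" for K
  proof (induction K)
    case 0 then show ?case by (intro exI[of _ "{}"]) auto
  next
    case (Suc K)
    then obtain Q where Q: "finite Q" "Q \<subseteq> {s. P s}" "card ((\<lambda>s. z s - s) ` Q) = K" by blast
    let ?V = "(\<lambda>s. z s - s) ` Q"
    have "{s. P s \<and> z s - s \<in> ?V} \<subseteq> (\<Union>u\<in>?V. {s. z s = s + u})"
      using Pgood by force
    moreover have "finite (\<Union>u\<in>?V. {s. z s = s + u})" using Q(1) fin by auto
    ultimately have "finite {s. P s \<and> z s - s \<in> ?V}" by (rule finite_subset)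
    then obtain s where s: "P s" "z s - s \<notin> ?V"
    proof -
      have "{s. P s} \<noteq> {s. P s \<and> z s - s \<in> ?V}"
        using inf \<open>finite {s. P s \<and> z s - s \<in> ?V}\<close> by metis
      then show ?thesis using that by blast
    qed
    have "(\<lambda>s. z s - s) ` insert s Q = insert (z s - s) ?V" by simp
    then have "card ((\<lambda>s. z s - s) ` insert s Q) = Suc K" using s(2) Q by simp
    then show ?case using Q s by (intro exI[of _ "insert s Q"]) auto
  qed
  show ?thesis
  proof (subst filterlim_at_top, intro allI)
    fix K
    obtain Q where Q: "finite Q" "Q \<subseteq> {s. P s}" "card ((\<lambda>s. z s - s) ` Q) = K" using ex by blast
    show "eventually (\<lambda>n. K \<le> Lambda z w (int n)) sequentially"
    proof (rule eventually_sequentiallyI[of "Max (insert 0 Q) + c"])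
      fix n assume n: "Max (insert 0 Q) + c \<le> n"
      let ?f = "\<lambda>s. int s - int (z s)"
      have sub: "?f ` Q \<subseteq> Tset z w (int n) \<inter> {..0}"
      proof
        fix x assume "x \<in> ?f ` Q"
        then obtain s where s: "s \<in> Q" "x = ?f s" by auto
        have Ps: "P s" using s Q(2) by auto
        have "s \<le> Max (insert 0 Q)" using s Q by auto
        hence "int s \<in> Tset z w (int n)" using Pgood[OF Ps] n by auto
        hence sub1: "Tset z w (int s) \<subseteq> Tset z w (int n)" by (rule Tset_trans)
        have "int s > 0" using Pgood[OF Ps] by auto
        have eq: "int s - int (max 1 (z (nat (int s)))) = ?f s" using zpos[of s] by auto
        have "?f s \<in> Tset z w (?f s)" by (rule Tset_self)
        hence "?f s \<in> Tset z w (int s)" using Tset_childz[OF \<open>int s > 0\<close>, of z w] eq by auto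
        moreover have "?f s \<le> 0" using Pgood[OF Ps] by auto
        ultimately show "x \<in> Tset z w (int n) \<inter> {..0}" using sub1 s by auto
      qed
      have "card ((\<lambda>s. z s - s) ` Q) = card (?f ` Q)"
      proof -
        have "(\<lambda>s. z s - s) ` Q = (\<lambda>x. nat (- x)) ` (?f ` Q)"
          using Q(2) Pgood by (force simp: image_image of_nat_diff intro!: image_cong)
        moreover have "inj_on (\<lambda>x. nat (- x)) (?f ` Q)"
        proof (rule inj_on_subset)
          show "inj_on (\<lambda>x. nat (- x)) {..(0::int)}" by (auto simp: inj_on_def)
          show "?f ` Q \<subseteq> {..0}" using Q(2) Pgood by force
        qed
        ultimately show ?thesis by (simp add: card_image)
      qed
      also have "\<dots> \<le> card (Tset z w (int n) \<inter> {..0})"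
        by (rule card_mono[OF _ sub]) (simp add: Tset_finite)
      finally show "K \<le> Lambda z w (int n)" using Q(3) by (simp add: Lambda_def)
    qed
  qed
qed



locale thm5 = prob_space M for M :: "'a measure" +
  fixes Z W :: "nat \<Rightarrow> 'a \<Rightarrow> nat"
  assumes indep: "indep_vars (\<lambda>_. count_space UNIV)
                  (\<lambda>i. case i of Inl n \<Rightarrow> Z n | Inr n \<Rightarrow> W n) UNIV"
    and distZ: "\<And>n. distr M (count_space UNIV) (Z n) = distr M (count_space UNIV) (Z 0)"
    and distW: "\<And>n. distr M (count_space UNIV) (W n) = distr M (count_space UNIV) (Z 0)"
    and pos: "\<And>n \<omega>. \<omega> \<in> space M \<Longrightarrow> Z n \<omega> \<ge> 1 \<and> W n \<omega> \<ge> 1"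
    and aperiodic: "Gcd {k. measure M {\<omega> \<in> space M. Z 0 \<omega> = k} > 0} = 1"
    and infmean: "(\<integral>\<^sup>+ \<omega>. ennreal (real (Z 0 \<omega>)) \<partial>M) = \<infinity>"
    and finmin: "(\<integral>\<^sup>+ \<omega>. ennreal (real (min (Z 0 \<omega>) (W 0 \<omega>))) \<partial>M) < \<infinity>"
begin

definition X :: "nat + nat \<Rightarrow> 'a \<Rightarrow> nat" where
  "X i = (case i of Inl n \<Rightarrow> Z n | Inr n \<Rightarrow> W n)"

lemma X_simps[simp]: "X (Inl n) = Z n" "X (Inr n) = W n"
  by (simp_all add: X_def)

lemma X_meas: "X i \<in> measurable M (count_space UNIV)"
  using indep unfolding indep_vars_def2 X_def by auto

lemma Z_meas[measurable]: "Z n \<in> measurable M (count_space UNIV)"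
  using X_meas[of "Inl n"] by simp

lemma W_meas[measurable]: "W n \<in> measurable M (count_space UNIV)"
  using X_meas[of "Inr n"] by simp

lemma X_ev: "{\<omega> \<in> space M. X i \<omega> \<in> B} \<in> events"
  using measurable_sets[OF X_meas, of B] by (simp add: vimage_def Int_def conj_commute)

lemma prodX:
  assumes "finite J" "J \<noteq> {}"
  shows "prob (\<Inter>i\<in>J. {\<omega> \<in> space M. X i \<omega> \<in> B i}) = (\<Prod>i\<in>J. prob {\<omega> \<in> space M. X i \<omega> \<in> B i})"
proof -
  have ind: "indep_sets (\<lambda>i. {X i -` A \<inter> space M | A. A \<in> sets (count_space UNIV)}) UNIV"
    using indep unfolding indep_vars_def2 X_def by auto
  have "\<forall>j\<in>J. {\<omega> \<in> space M. X j \<omega> \<in> B j} \<in> {X j -` A \<inter> space M | A. A \<in> sets (count_space UNIV)}"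
    by auto
  from indep_setsD[OF ind _ assms(2) assms(1) this] show ?thesis by simp
qed

lemma prodX_insert:
  assumes "finite J" "J \<noteq> {}" "i \<notin> J"
  shows "prob ((\<Inter>j\<in>J. {\<omega> \<in> space M. X j \<omega> \<in> B j}) \<inter> {\<omega> \<in> space M. X i \<omega> \<in> C})
       = prob (\<Inter>j\<in>J. {\<omega> \<in> space M. X j \<omega> \<in> B j}) * prob {\<omega> \<in> space M. X i \<omega> \<in> C}"
proof -
  let ?B = "B(i := C)"
  have "(\<Inter>j\<in>J. {\<omega> \<in> space M. X j \<omega> \<in> B j}) \<inter> {\<omega> \<in> space M. X i \<omega> \<in> C}
      = (\<Inter>j\<in>insert i J. {\<omega> \<in> space M. X j \<omega> \<in> ?B j})"
  proof -
    have e1: "(\<Inter>j\<in>J. {\<omega> \<in> space M. X j \<omega> \<in> ?B j}) = (\<Inter>j\<in>J. {\<omega> \<in> space M. X j \<omega> \<in> B j})"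
      by (rule INF_cong[OF refl]) (metis assms(3) fun_upd_other)
    show ?thesis by (simp only: INT_insert e1 fun_upd_same) blast
  qed
  also have "prob \<dots> = (\<Prod>j\<in>insert i J. prob {\<omega> \<in> space M. X j \<omega> \<in> ?B j})"
    using assms by (intro prodX) auto
  also have "\<dots> = prob {\<omega> \<in> space M. X i \<omega> \<in> C} * (\<Prod>j\<in>J. prob {\<omega> \<in> space M. X j \<omega> \<in> ?B j})"
    using assms by (subst prod.insert) auto
  also have "(\<Prod>j\<in>J. prob {\<omega> \<in> space M. X j \<omega> \<in> ?B j}) = (\<Prod>j\<in>J. prob {\<omega> \<in> space M. X j \<omega> \<in> B j})"
    by (rule prod.cong[OF refl]) (metis assms(3) fun_upd_other)
  also have "(\<Prod>j\<in>J. prob {\<omega> \<in> space M. X j \<omega> \<in> B j}) = prob (\<Inter>j\<in>J. {\<omega> \<in> space M. X j \<omega> \<in> B j})"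
    using assms by (intro prodX[symmetric])
  finally show ?thesis by simp
qed

lemma prodX2:
  assumes "i \<noteq> j"
  shows "prob ({\<omega> \<in> space M. X i \<omega> \<in> B} \<inter> {\<omega> \<in> space M. X j \<omega> \<in> C})
       = prob {\<omega> \<in> space M. X i \<omega> \<in> B} * prob {\<omega> \<in> space M. X j \<omega> \<in> C}"
proof -
  have "(\<Inter>j\<in>{i}. {\<omega> \<in> space M. X j \<omega> \<in> B}) = {\<omega> \<in> space M. X i \<omega> \<in> B}" by simp
  with prodX_insert[of "{i}" j "\<lambda>_. B" C] assms show ?thesis by simp
qed

lemma distZ': "prob {\<omega> \<in> space M. Z n \<omega> \<in> B} = prob {\<omega> \<in> space M. Z 0 \<omega> \<in> B}"
proof -
  have "measure (distr M (count_space UNIV) (Z n)) B = measure (distr M (count_space UNIV) (Z 0)) B"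
    by (subst distZ) (rule refl)
  then show ?thesis by (simp add: measure_distr vimage_def Int_def conj_commute)
qed

lemma distW': "prob {\<omega> \<in> space M. W n \<omega> \<in> B} = prob {\<omega> \<in> space M. Z 0 \<omega> \<in> B}"
proof -
  have "measure (distr M (count_space UNIV) (W n)) B = measure (distr M (count_space UNIV) (Z 0)) B"
    by (subst distW) (rule refl)
  then show ?thesis by (simp add: measure_distr vimage_def Int_def conj_commute)
qed

end


context thm5 begin

lemma ennreal_nat_suminf: "ennreal (real n) = (\<Sum>k. indicator {..<n} k :: ennreal)"
proof -
  have "(\<Sum>k. indicator {..<n} k :: ennreal) = (\<Sum>k\<in>{..<n}. indicator {..<n} k)"
    by (rule suminf_finite) auto
  also have "\<dots> = of_nat n" by simp
  finally show ?thesis by (simp add: ennreal_of_nat_eq_real_of_nat)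
qed

lemma nn_integral_nat:
  assumes [measurable]: "f \<in> measurable M (count_space UNIV)"
  shows "(\<integral>\<^sup>+ \<omega>. ennreal (real (f \<omega>)) \<partial>M) = (\<Sum>k. emeasure M {\<omega> \<in> space M. f \<omega> \<ge> Suc k})"
proof -
  have "(\<integral>\<^sup>+ \<omega>. ennreal (real (f \<omega>)) \<partial>M) = (\<integral>\<^sup>+ \<omega>. (\<Sum>k. indicator {\<omega> \<in> space M. f \<omega> \<ge> Suc k} \<omega>) \<partial>M)"
    by (rule nn_integral_cong) (simp add: ennreal_nat_suminf indicator_def Suc_le_eq)
  also have "\<dots> = (\<Sum>k. (\<integral>\<^sup>+ \<omega>. indicator {\<omega> \<in> space M. f \<omega> \<ge> Suc k} \<omega> \<partial>M))"
    by (rule nn_integral_suminf) measurable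
  also have "\<dots> = (\<Sum>k. emeasure M {\<omega> \<in> space M. f \<omega> \<ge> Suc k})"
    by (rule suminf_cong, rule nn_integral_indicator) measurable
  finally show ?thesis .
qed

definition p :: "nat \<Rightarrow> real" where
  "p s = prob {\<omega> \<in> space M. Z 0 \<omega> \<ge> s}"

lemma p_nonneg: "p s \<ge> 0" by (simp add: p_def)

lemma p_not_summable: "\<not> summable (\<lambda>k. p (Suc k))"
proof
  assume s: "summable (\<lambda>k. p (Suc k))"
  have "(\<integral>\<^sup>+ \<omega>. ennreal (real (Z 0 \<omega>)) \<partial>M) = (\<Sum>k. ennreal (p (Suc k)))"
    by (subst nn_integral_nat) (auto simp: p_def emeasure_eq_measure)
  also have "\<dots> = ennreal (\<Sum>k. p (Suc k))"
    using s by (intro suminf_ennreal2) (auto simp: p_nonneg)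
  finally show False using infmean by simp
qed

definition q :: "nat \<Rightarrow> real" where
  "q k = prob ({\<omega> \<in> space M. Z 0 \<omega> > k} \<inter> {\<omega> \<in> space M. W 0 \<omega> > k})"

lemma q_summable: "summable q"
proof -
  have "(\<integral>\<^sup>+ \<omega>. ennreal (real (min (Z 0 \<omega>) (W 0 \<omega>))) \<partial>M) = (\<Sum>k. ennreal (q k))"
  proof (subst nn_integral_nat)
    show "(\<lambda>\<omega>. min (Z 0 \<omega>) (W 0 \<omega>)) \<in> measurable M (count_space UNIV)" by measurable
    have "\<And>k. {\<omega> \<in> space M. Suc k \<le> min (Z 0 \<omega>) (W 0 \<omega>)} = {\<omega> \<in> space M. Z 0 \<omega> > k} \<inter> {\<omega> \<in> space M. W 0 \<omega> > k}"
      by auto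
    then show "(\<Sum>k. emeasure M {\<omega> \<in> space M. Suc k \<le> min (Z 0 \<omega>) (W 0 \<omega>)}) = (\<Sum>k. ennreal (q k))"
      by (simp add: q_def emeasure_eq_measure)
  qed
  with finmin have "(\<Sum>k. ennreal (q k)) \<noteq> top" by simp
  then show ?thesis by (rule summable_suminf_not_top[rotated]) (simp add: q_def)
qed

lemma q_eq: "prob ({\<omega> \<in> space M. Z t \<omega> > k} \<inter> {\<omega> \<in> space M. W t \<omega> > k}) = q k"
proof -
  have "prob ({\<omega> \<in> space M. Z t \<omega> > k} \<inter> {\<omega> \<in> space M. W t \<omega> > k})
      = prob {\<omega> \<in> space M. Z t \<omega> \<in> {k<..}} * prob {\<omega> \<in> space M. W t \<omega> \<in> {k<..}}"
    using prodX2[of "Inl t" "Inr t" "{k<..}" "{k<..}"] by simp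
  also have "\<dots> = prob {\<omega> \<in> space M. Z 0 \<omega> \<in> {k<..}} * prob {\<omega> \<in> space M. W 0 \<omega> \<in> {k<..}}"
    by (simp only: distZ'[of t] distW'[of t] distW'[of 0])
  also have "\<dots> = q k"
    using prodX2[of "Inl 0" "Inr 0" "{k<..}" "{k<..}"] by (simp add: q_def)
  finally show ?thesis .
qed

lemma p_eq: "prob {\<omega> \<in> space M. Z t \<omega> \<ge> k} = p k"
  using distZ'[of t "{k..}"] by (simp add: p_def)

lemma p_tendsto: "p \<longlonglongrightarrow> 0"
proof -
  have "(\<lambda>n. prob {\<omega> \<in> space M. Z 0 \<omega> \<ge> n}) \<longlonglongrightarrow> prob (\<Inter>n. {\<omega> \<in> space M. Z 0 \<omega> \<ge> n})"
    by (rule finite_Lim_measure_decseq) (auto simp: decseq_def)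
  moreover have "(\<Inter>n. {\<omega> \<in> space M. Z 0 \<omega> \<ge> n}) = {}"
    by auto (metis Suc_n_not_le_n)
  ultimately show ?thesis unfolding p_def[abs_def] by simp
qed

end


context thm5 begin

definition S :: "nat set" where "S = {k. measure M {\<omega> \<in> space M. Z 0 \<omega> = k} > 0}"

lemma S0: "0 \<notin> S"
proof -
  have "{\<omega> \<in> space M. Z 0 \<omega> = 0} = {}"
  proof (rule ccontr)
    assume "{\<omega> \<in> space M. Z 0 \<omega> = 0} \<noteq> {}"
    then obtain \<omega> where "\<omega> \<in> space M" "Z 0 \<omega> = 0" by blast
    with pos[of \<omega> 0] show False by simp
  qed
  then show ?thesis unfolding S_def mem_Collect_eq by (metis measure_empty less_irrefl)
qed

lemma S_gcd: "Gcd S = 1" using aperiodic by (simp add: S_def)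

definition N0 :: nat where "N0 = (SOME N0. \<forall>n\<ge>N0. n \<in> sgp S)"

lemma N0: "n \<ge> N0 \<Longrightarrow> n \<in> sgp S"
  using someI_ex[OF sgp_large[OF S_gcd S0]] unfolding N0_def by blast

definition zs :: "nat \<Rightarrow> nat" where "zs j = (SOME d. d \<in> S \<and> d \<le> j \<and> j - d \<in> sgp S)"

lemma zs: assumes "j \<in> sgp S" "j > 0" shows "zs j \<in> S" "zs j \<le> j" "j - zs j \<in> sgp S" "zs j \<ge> 1"
proof -
  have "zs j \<in> S \<and> zs j \<le> j \<and> j - zs j \<in> sgp S"
    unfolding zs_def by (rule someI_ex) (rule sgp_dec[OF assms])
  then show "zs j \<in> S" "zs j \<le> j" "j - zs j \<in> sgp S" by auto
  then show "zs j \<ge> 1" using S0 by (cases "zs j") auto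
qed

lemma q_nonneg: "q k \<ge> 0" by (simp add: q_def)

lemma exists_r: "\<exists>r. r \<ge> 1 \<and> (\<Sum>k. q (k + r)) < 1/2"
proof -
  have "(\<lambda>n. \<Sum>k. q (k + n)) \<longlonglongrightarrow> 0" by (rule suminf_exist_split2[OF q_summable])
  then have "eventually (\<lambda>n. (\<Sum>k. q (k + n)) < 1/2) sequentially"
    by (rule order_tendstoD) simp
  then obtain N where N: "\<And>n. n \<ge> N \<Longrightarrow> (\<Sum>k. q (k + n)) < 1/2" by (auto simp: eventually_sequentially)
  have "Suc N \<ge> 1 \<and> (\<Sum>k. q (k + Suc N)) < 1/2" using N[of "Suc N"] by simp
  then show ?thesis by blast
qed

definition r :: nat where "r = (SOME r. r \<ge> 1 \<and> (\<Sum>k. q (k + r)) < 1/2)"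

lemma r_prop: "r \<ge> 1 \<and> (\<Sum>k. q (k + r)) < 1/2"
  unfolding r_def by (rule someI_ex[OF exists_r])

lemma r: "(\<Sum>k. q (k + r)) < 1/2" using r_prop by simp
lemma r1: "r \<ge> 1" using r_prop by simp

lemma q_r_summable: "summable (\<lambda>k. q (k + r))"
  using q_summable by (rule summable_ignore_initial_segment)

definition c :: nat where "c = N0 + r"

lemma c1: "c \<ge> 1" using r1 by (simp add: c_def)

definition J0 :: "nat set" where "J0 = {j. 0 < j \<and> j < c \<and> j \<in> sgp S}"

lemma J0_finite: "finite J0" by (auto simp: J0_def)

definition kappa :: real where "kappa = (\<Prod>j\<in>J0. prob {\<omega> \<in> space M. Z 0 \<omega> = zs j})"

lemma kappa_pos: "kappa > 0"
  unfolding kappa_def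
proof (rule prod_pos)
  fix j assume "j \<in> J0"
  then have "zs j \<in> S" using zs(1)[of j] by (auto simp: J0_def)
  then show "prob {\<omega> \<in> space M. Z 0 \<omega> = zs j} > 0" by (simp add: S_def)
qed

definition G :: "nat \<Rightarrow> 'a set" where "G s = {\<omega> \<in> space M. Z s \<omega> \<ge> s}"
definition Cf :: "nat \<Rightarrow> 'a set" where "Cf s = {\<omega> \<in> space M. \<forall>j\<in>J0. Z (s + j) \<omega> = zs j}"
definition Tl :: "nat \<Rightarrow> 'a set" where
  "Tl s = (\<Inter>t. {\<omega> \<in> space M. s + c \<le> t \<longrightarrow> Z t \<omega> \<le> t - (s + N0) \<or> W t \<omega> \<le> t - (s + N0)})"
definition A :: "nat \<Rightarrow> 'a set" where "A s = G s \<inter> Cf s \<inter> Tl s"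

lemma G_ev[measurable]: "G s \<in> events" unfolding G_def by measurable
lemma Cf_ev[measurable]: "Cf s \<in> events" unfolding Cf_def by measurable
lemma Tl_ev1: "{\<omega> \<in> space M. s + c \<le> t \<longrightarrow> Z t \<omega> \<le> t - (s + N0) \<or> W t \<omega> \<le> t - (s + N0)} \<in> events"
proof (cases "s + c \<le> t")
  case True
  have "{\<omega> \<in> space M. s + c \<le> t \<longrightarrow> Z t \<omega> \<le> t - (s + N0) \<or> W t \<omega> \<le> t - (s + N0)}
     = {\<omega> \<in> space M. X (Inl t) \<omega> \<in> {..t - (s + N0)}} \<union> {\<omega> \<in> space M. X (Inr t) \<omega> \<in> {..t - (s + N0)}}"
    using True by (simp only: X_simps atMost_iff) blast
  also have "\<dots> \<in> events" by (rule sets.Un; rule X_ev)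
  finally show ?thesis .
next
  case False
  then have "{\<omega> \<in> space M. s + c \<le> t \<longrightarrow> Z t \<omega> \<le> t - (s + N0) \<or> W t \<omega> \<le> t - (s + N0)} = space M"
    by blast
  then show ?thesis by (simp only: sets.top)
qed

lemma Tl_ev[measurable]: "Tl s \<in> events" unfolding Tl_def
proof (rule sets.countable_INT)
  show "range (\<lambda>t. {\<omega> \<in> space M. s + c \<le> t \<longrightarrow> Z t \<omega> \<le> t - (s + N0) \<or> W t \<omega> \<le> t - (s + N0)}) \<subseteq> events"
    using Tl_ev1 by (simp only: image_subset_iff) (intro ballI TrueI)
qed simp
lemma A_ev[measurable]: "A s \<in> events" unfolding A_def by (intro sets.Int G_ev Cf_ev Tl_ev)

end


context thm5 begin

lemma INT_insert_form:
  assumes "i \<notin> J"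
  shows "(\<Inter>j\<in>J. {\<omega> \<in> space M. X j \<omega> \<in> B j}) \<inter> {\<omega> \<in> space M. X i \<omega> \<in> C}
      = (\<Inter>j\<in>insert i J. {\<omega> \<in> space M. X j \<omega> \<in> (B(i := C)) j})"
proof -
  have e1: "(\<Inter>j\<in>J. {\<omega> \<in> space M. X j \<omega> \<in> (B(i := C)) j}) = (\<Inter>j\<in>J. {\<omega> \<in> space M. X j \<omega> \<in> B j})"
    by (rule INF_cong[OF refl]) (metis assms fun_upd_other)
  show ?thesis by (simp only: INT_insert e1 fun_upd_same) blast
qed

lemma prodX_insert2:
  assumes "finite J" "J \<noteq> {}" "i1 \<notin> J" "i2 \<notin> J" "i1 \<noteq> i2"
  shows "prob ((\<Inter>j\<in>J. {\<omega> \<in> space M. X j \<omega> \<in> B j}) \<inter> {\<omega> \<in> space M. X i1 \<omega> \<in> C1} \<inter> {\<omega> \<in> space M. X i2 \<omega> \<in> C2})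
       = prob (\<Inter>j\<in>J. {\<omega> \<in> space M. X j \<omega> \<in> B j}) * prob {\<omega> \<in> space M. X i1 \<omega> \<in> C1} * prob {\<omega> \<in> space M. X i2 \<omega> \<in> C2}"
proof -
  have "prob ((\<Inter>j\<in>J. {\<omega> \<in> space M. X j \<omega> \<in> B j}) \<inter> {\<omega> \<in> space M. X i1 \<omega> \<in> C1} \<inter> {\<omega> \<in> space M. X i2 \<omega> \<in> C2})
     = prob ((\<Inter>j\<in>insert i1 J. {\<omega> \<in> space M. X j \<omega> \<in> (B(i1 := C1)) j}) \<inter> {\<omega> \<in> space M. X i2 \<omega> \<in> C2})"
    by (simp only: INT_insert_form[OF assms(3)])
  also have "\<dots> = prob (\<Inter>j\<in>insert i1 J. {\<omega> \<in> space M. X j \<omega> \<in> (B(i1 := C1)) j}) * prob {\<omega> \<in> space M. X i2 \<omega> \<in> C2}"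
    using assms by (intro prodX_insert) auto
  also have "(\<Inter>j\<in>insert i1 J. {\<omega> \<in> space M. X j \<omega> \<in> (B(i1 := C1)) j}) = (\<Inter>j\<in>J. {\<omega> \<in> space M. X j \<omega> \<in> B j}) \<inter> {\<omega> \<in> space M. X i1 \<omega> \<in> C1}"
    by (simp only: INT_insert_form[OF assms(3)])
  also have "prob \<dots> = prob (\<Inter>j\<in>J. {\<omega> \<in> space M. X j \<omega> \<in> B j}) * prob {\<omega> \<in> space M. X i1 \<omega> \<in> C1}"
    using assms by (intro prodX_insert) auto
  finally show ?thesis .
qed

definition Jg :: "nat \<Rightarrow> (nat + nat) set" where
  "Jg s = insert (Inl s) ((\<lambda>j. Inl (s + j)) ` J0)"

definition Bg :: "nat \<Rightarrow> nat + nat \<Rightarrow> nat set" where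
  "Bg s i = (case i of Inl n \<Rightarrow> (if n = s then {s..} else {zs (n - s)}) | Inr n \<Rightarrow> UNIV)"

lemma J0_pos: "j \<in> J0 \<Longrightarrow> j > 0" by (simp add: J0_def)
lemma J0_less: "j \<in> J0 \<Longrightarrow> j < c" by (simp add: J0_def)

lemma GC_eq: "G s \<inter> Cf s = (\<Inter>i\<in>Jg s. {\<omega> \<in> space M. X i \<omega> \<in> Bg s i})"
proof (rule set_eqI)
  fix \<omega>
  have "\<omega> \<in> (\<Inter>i\<in>Jg s. {\<omega> \<in> space M. X i \<omega> \<in> Bg s i}) \<longleftrightarrow>
        \<omega> \<in> space M \<and> Z s \<omega> \<ge> s \<and> (\<forall>j\<in>J0. Z (s + j) \<omega> \<in> Bg s (Inl (s + j)))"
    unfolding Jg_def by (auto simp: Bg_def)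
  also have "(\<forall>j\<in>J0. Z (s + j) \<omega> \<in> Bg s (Inl (s + j))) \<longleftrightarrow> (\<forall>j\<in>J0. Z (s + j) \<omega> = zs j)"
  proof -
    have "\<And>j. j \<in> J0 \<Longrightarrow> Bg s (Inl (s + j)) = {zs j}" by (auto simp: Bg_def dest: J0_pos)
    then show ?thesis by auto
  qed
  finally show "\<omega> \<in> G s \<inter> Cf s \<longleftrightarrow> \<omega> \<in> (\<Inter>i\<in>Jg s. {\<omega> \<in> space M. X i \<omega> \<in> Bg s i})"
    by (auto simp: G_def Cf_def)
qed

lemma Jg_finite: "finite (Jg s)" by (simp add: Jg_def J0_finite)
lemma Jg_ne: "Jg s \<noteq> {}" by (simp add: Jg_def)

lemma prob_GC: "prob (G s \<inter> Cf s) = p s * kappa"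
proof -
  have notin: "Inl s \<notin> (\<lambda>j. Inl (s + j)) ` J0" by (auto dest: J0_pos)
  have inj: "inj_on (\<lambda>j. Inl (s + j) :: nat + nat) J0" by (auto simp: inj_on_def)
  have "prob (G s \<inter> Cf s) = (\<Prod>i\<in>Jg s. prob {\<omega> \<in> space M. X i \<omega> \<in> Bg s i})"
    by (simp only: GC_eq prodX[OF Jg_finite Jg_ne])
  also have "\<dots> = prob {\<omega> \<in> space M. X (Inl s) \<omega> \<in> Bg s (Inl s)} *
       (\<Prod>i\<in>(\<lambda>j. Inl (s + j)) ` J0. prob {\<omega> \<in> space M. X i \<omega> \<in> Bg s i})"
    unfolding Jg_def by (rule prod.insert) (use J0_finite notin in auto)
  also have "(\<Prod>i\<in>(\<lambda>j. Inl (s + j)) ` J0. prob {\<omega> \<in> space M. X i \<omega> \<in> Bg s i})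
      = (\<Prod>j\<in>J0. prob {\<omega> \<in> space M. X (Inl (s + j)) \<omega> \<in> Bg s (Inl (s + j))})"
    by (rule prod.reindex[OF inj, unfolded comp_def])
  also have "\<dots> = (\<Prod>j\<in>J0. prob {\<omega> \<in> space M. Z 0 \<omega> = zs j})"
  proof (rule prod.cong[OF refl])
    fix j assume j: "j \<in> J0"
    have "Bg s (Inl (s + j)) = {zs j}" using J0_pos[OF j] by (simp add: Bg_def)
    then show "prob {\<omega> \<in> space M. X (Inl (s + j)) \<omega> \<in> Bg s (Inl (s + j))} = prob {\<omega> \<in> space M. Z 0 \<omega> = zs j}"
      using distZ'[of "s + j" "{zs j}"] by simp
  qed
  also have "prob {\<omega> \<in> space M. X (Inl s) \<omega> \<in> Bg s (Inl s)} = p s"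
    using p_eq[of s s] by (simp add: Bg_def atLeast_def)
  finally show ?thesis by (simp add: kappa_def)
qed

lemma prob_GC_tail:
  assumes "t \<ge> s + c"
  shows "prob (G s \<inter> Cf s \<inter> {\<omega> \<in> space M. Z t \<omega> > k} \<inter> {\<omega> \<in> space M. W t \<omega> > k}) = prob (G s \<inter> Cf s) * q k"
proof -
  have n1: "Inl t \<notin> Jg s" using assms c1 by (auto simp: Jg_def dest: J0_less)
  have n2: "Inr t \<notin> Jg s" by (auto simp: Jg_def)
  have "prob (G s \<inter> Cf s \<inter> {\<omega> \<in> space M. Z t \<omega> > k} \<inter> {\<omega> \<in> space M. W t \<omega> > k})
     = prob ((\<Inter>i\<in>Jg s. {\<omega> \<in> space M. X i \<omega> \<in> Bg s i}) \<inter> {\<omega> \<in> space M. X (Inl t) \<omega> \<in> {k<..}} \<inter> {\<omega> \<in> space M. X (Inr t) \<omega> \<in> {k<..}})"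
    by (simp add: GC_eq)
  also have "\<dots> = prob (\<Inter>i\<in>Jg s. {\<omega> \<in> space M. X i \<omega> \<in> Bg s i}) * prob {\<omega> \<in> space M. X (Inl t) \<omega> \<in> {k<..}} * prob {\<omega> \<in> space M. X (Inr t) \<omega> \<in> {k<..}}"
    by (rule prodX_insert2[OF Jg_finite Jg_ne n1 n2]) simp
  finally have h1: "prob (G s \<inter> Cf s \<inter> {\<omega> \<in> space M. Z t \<omega> > k} \<inter> {\<omega> \<in> space M. W t \<omega> > k}) =
     prob (\<Inter>i\<in>Jg s. {\<omega> \<in> space M. X i \<omega> \<in> Bg s i}) * (prob {\<omega> \<in> space M. X (Inl t) \<omega> \<in> {k<..}} * prob {\<omega> \<in> space M. X (Inr t) \<omega> \<in> {k<..}})"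
    by (simp only: mult.assoc)
  have h2: "prob {\<omega> \<in> space M. X (Inl t) \<omega> \<in> {k<..}} * prob {\<omega> \<in> space M. X (Inr t) \<omega> \<in> {k<..}} = q k"
    using prodX2[of "Inl t" "Inr t" "{k<..}" "{k<..}"] q_eq[of k t] by simp
  show ?thesis by (subst h1) (simp only: h2 GC_eq)
qed

end


context thm5 begin

lemma prob_A_lower: "prob (A s) \<ge> kappa * p s / 2"
proof -
  let ?GC = "G s \<inter> Cf s"
  let ?E = "\<lambda>t. ?GC \<inter> {\<omega> \<in> space M. Z (t + (s + c)) \<omega> > t + r} \<inter> {\<omega> \<in> space M. W (t + (s + c)) \<omega> > t + r}"
  have sub: "?GC - Tl s \<subseteq> (\<Union>t. ?E t)"
  proof
    fix \<omega> assume w: "\<omega> \<in> ?GC - Tl s"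
    then have sp: "\<omega> \<in> space M" by (auto simp: G_def)
    from w sp obtain t' where t': "s + c \<le> t'" "\<not> (Z t' \<omega> \<le> t' - (s + N0) \<or> W t' \<omega> \<le> t' - (s + N0))"
      unfolding Tl_def by blast
    define t where "t = t' - (s + c)"
    have tt: "t + (s + c) = t'" "t' - (s + N0) = t + r" using t'(1) unfolding t_def c_def by auto
    show "\<omega> \<in> (\<Union>t. ?E t)"
      using t'(2) w sp tt by (intro UN_I[of t]) auto
  qed
  have meas: "\<And>t. ?E t \<in> events" by measurable
  have eqE: "\<And>t. prob (?E t) = prob ?GC * q (t + r)"
    by (rule prob_GC_tail) simp
  have summ: "summable (\<lambda>t. prob (?E t))"
    unfolding eqE by (intro summable_mult q_r_summable)
  have "prob (?GC - Tl s) \<le> prob (\<Union>t. ?E t)"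
    by (rule finite_measure_mono[OF sub]) (use meas in auto)
  also have "\<dots> \<le> (\<Sum>t. prob (?E t))"
    by (rule finite_measure_subadditive_countably) (use meas summ in auto)
  also have "\<dots> = prob ?GC * (\<Sum>t. q (t + r))"
    unfolding eqE by (rule suminf_mult[OF q_r_summable])
  also have "\<dots> \<le> prob ?GC * (1/2)"
    using r by (intro mult_left_mono) auto
  finally have d: "prob (?GC - Tl s) \<le> prob ?GC / 2" by simp
  have AGC: "A s \<subseteq> ?GC" unfolding A_def by blast
  have "prob (A s) = prob ?GC - prob (?GC - A s)"
    using finite_measure_Diff[OF _ _ AGC] by simp
  also have "?GC - A s = ?GC - Tl s" by (auto simp: A_def)
  finally have "prob (A s) \<ge> prob ?GC / 2" using d by simp
  then show ?thesis using prob_GC[of s] by (simp add: mult.commute)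
qed

lemma prob_AA: "s \<noteq> t \<Longrightarrow> prob (A s \<inter> A t) \<le> p s * p t"
proof -
  assume st: "s \<noteq> t"
  have "prob (A s \<inter> A t) \<le> prob ({\<omega> \<in> space M. X (Inl s) \<omega> \<in> {s..}} \<inter> {\<omega> \<in> space M. X (Inl t) \<omega> \<in> {t..}})"
    by (rule finite_measure_mono) (auto simp: A_def G_def intro!: sets.Int X_ev)
  also have "\<dots> = p s * p t"
    using prodX2[of "Inl s" "Inl t" "{s..}" "{t..}"] st p_eq[of s s] p_eq[of t t] by (simp add: atLeast_def)
  finally show ?thesis .
qed

lemma A_reach:
  assumes w: "\<omega> \<in> A s" and s1: "s \<ge> 1"
  shows "Z s \<omega> \<ge> s \<and> (\<forall>m\<ge>s + N0. int s \<in> Tset (\<lambda>k. Z k \<omega>) (\<lambda>k. W k \<omega>) (int m))"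
proof -
  have sp: "\<omega> \<in> space M" using w by (auto simp: A_def G_def)
  have g: "Z s \<omega> \<ge> s" using w by (auto simp: A_def G_def)
  have cf: "\<And>j. j \<in> J0 \<Longrightarrow> Z (s + j) \<omega> = zs j" using w by (auto simp: A_def Cf_def)
  have tl: "\<And>t. t \<ge> s + c \<Longrightarrow> Z t \<omega> \<le> t - (s + N0) \<or> W t \<omega> \<le> t - (s + N0)"
    using w unfolding A_def Tl_def by blast
  have "int s \<in> Tset (\<lambda>k. Z k \<omega>) (\<lambda>k. W k \<omega>) (int m)" if m: "m \<ge> s + N0" for m
  proof (rule reach_lemma[where S=S and NN=N0 and zs=zs and r=r])
    show "\<And>t. Z t \<omega> \<ge> 1" "\<And>t. W t \<omega> \<ge> 1" using pos[OF sp] by auto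
    show "\<And>n. n \<ge> N0 \<Longrightarrow> n \<in> sgp S" by (rule N0)
    show "\<And>j. j \<in> sgp S \<Longrightarrow> j > 0 \<Longrightarrow> zs j \<ge> 1 \<and> zs j \<le> j \<and> j - zs j \<in> sgp S"
      using zs by blast
    show "\<And>j. 0 < j \<Longrightarrow> j < N0 + r \<Longrightarrow> j \<in> sgp S \<Longrightarrow> Z (s + j) \<omega> = zs j"
      using cf by (auto simp: J0_def c_def)
    show "\<And>t. t \<ge> s + N0 + r \<Longrightarrow> min (Z t \<omega>) (W t \<omega>) \<le> t - (s + N0)"
      using tl by (auto simp: c_def add.assoc min_le_iff_disj)
  qed (use m s1 in auto)
  with g show ?thesis by blast
qed

end


lemma (in prob_space) bonferroni:
  assumes ev: "\<And>i. F i \<in> events"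
  shows "prob (\<Union>s<(N::nat). F s) \<ge> (\<Sum>s<N. prob (F s)) - (\<Sum>s<N. \<Sum>t<s. prob (F s \<inter> F t))"
proof (induction N)
  case 0 then show ?case by simp
next
  case (Suc N)
  let ?U = "\<Union>s<N. F s"
  have Uev: "?U \<in> events" by (rule sets.finite_UN) (use ev in auto)
  have e1: "(\<Union>s<Suc N. F s) = ?U \<union> F N"
    by (simp only: lessThan_Suc UN_insert Un_commute)
  have e2: "prob (?U \<union> F N) = prob ?U + prob (F N - ?U)"
    by (rule finite_measure_Union'[OF Uev ev])
  have e3: "prob (F N - ?U) = prob (F N) - prob (F N \<inter> ?U)"
    by (rule finite_measure_Diff'[OF ev Uev])
  have e4: "F N \<inter> ?U = (\<Union>t<N. F N \<inter> F t)" by (simp only: Int_UN_distrib)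
  have e5: "prob (\<Union>t<N. F N \<inter> F t) \<le> (\<Sum>t<N. prob (F N \<inter> F t))"
    by (rule finite_measure_subadditive_finite) (use ev in auto)
  have e6: "(\<Sum>s<Suc N. prob (F s)) = (\<Sum>s<N. prob (F s)) + prob (F N)"
    by (rule sum.lessThan_Suc)
  have e7: "(\<Sum>s<Suc N. \<Sum>t<s. prob (F s \<inter> F t)) = (\<Sum>s<N. \<Sum>t<s. prob (F s \<inter> F t)) + (\<Sum>t<N. prob (F N \<inter> F t))"
    by (rule sum.lessThan_Suc)
  show ?case unfolding e1 e2 e3 e4 e6 e7 using Suc.IH e5 by linarith
qed

context thm5 begin

lemma p_partial_unbounded: "\<exists>L. (\<Sum>i<L. p (n + i)) \<ge> B"
proof (rule ccontr)
  assume "\<not> ?thesis"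
  then have b: "\<And>L. (\<Sum>i<L. p (n + i)) \<le> B" by (meson linorder_linear not_le)
  have "summable (\<lambda>i. p (i + n))"
    by (rule summableI_nonneg_bounded[of _ B]) (use b p_nonneg in \<open>auto simp: add.commute\<close>)
  then have "summable p" by (simp only: summable_iff_shift)
  then have "summable (\<lambda>i. p (i + 1))" by (simp only: summable_iff_shift)
  then have "summable (\<lambda>i. p (Suc i))" by simp
  with p_not_summable show False by simp
qed

lemma block_bound:
  shows "prob (\<Union>s\<in>{n..}. A s) \<ge> kappa^2 / 64"
proof -
  have kp: "kappa > 0" by (rule kappa_pos)
  have "eventually (\<lambda>s. p s < kappa / 16) sequentially"
    using p_tendsto kp by (intro order_tendstoD) auto
  then obtain n1 where n1: "\<And>s. s \<ge> n1 \<Longrightarrow> p s < kappa / 16" by (auto simp: eventually_sequentially)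
  define n' where "n' = max n n1"
  define P where "P L = (\<Sum>i<L. p (n' + i))" for L
  obtain L where L: "P L \<ge> kappa / 16" using p_partial_unbounded unfolding P_def by blast
  define L0 where "L0 = (LEAST L. P L \<ge> kappa / 16)"
  have L0: "P L0 \<ge> kappa / 16" unfolding L0_def by (rule LeastI[of _ L]) (rule L)
  have L0pos: "L0 > 0"
  proof (rule ccontr)
    assume "\<not> L0 > 0" then have "L0 = 0" by simp
    with L0 kp show False by (simp add: P_def)
  qed
  have less: "P (L0 - 1) < kappa / 16"
  proof (rule ccontr)
    assume "\<not> P (L0 - 1) < kappa / 16"
    then have "L0 \<le> L0 - 1" unfolding L0_def by (intro Least_le) simp
    with L0pos show False by simp
  qed
  have "P L0 = P (L0 - 1) + p (n' + (L0 - 1))"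
    using L0pos unfolding P_def by (metis Suc_diff_1 sum.lessThan_Suc)
  also have "p (n' + (L0 - 1)) < kappa / 16" using n1 unfolding n'_def by simp
  finally have xup: "P L0 \<le> kappa / 8" using less by simp
  define x where "x = P L0"
  let ?F = "\<lambda>i. A (n' + i)"
  have "prob (\<Union>i<L0. ?F i) \<ge> (\<Sum>i<L0. prob (?F i)) - (\<Sum>i<L0. \<Sum>j<i. prob (?F i \<inter> ?F j))"
    by (rule bonferroni) simp
  moreover have "(\<Sum>i<L0. prob (?F i)) \<ge> kappa / 2 * x"
  proof -
    have "(\<Sum>i<L0. prob (?F i)) \<ge> (\<Sum>i<L0. kappa / 2 * p (n' + i))"
    proof (rule sum_mono)
      fix i
      have "kappa / 2 * p (n' + i) = kappa * p (n' + i) / 2" by simp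
      with prob_A_lower[of "n' + i"] show "kappa / 2 * p (n' + i) \<le> prob (A (n' + i))" by linarith
    qed
    also have "(\<Sum>i<L0. kappa / 2 * p (n' + i)) = kappa / 2 * x"
      by (simp add: x_def P_def sum_distrib_left)
    finally show ?thesis by simp
  qed
  moreover have "(\<Sum>i<L0. \<Sum>j<i. prob (?F i \<inter> ?F j)) \<le> x * x"
  proof -
    have "(\<Sum>i<L0. \<Sum>j<i. prob (?F i \<inter> ?F j)) \<le> (\<Sum>i<L0. \<Sum>j<L0. p (n' + i) * p (n' + j))"
    proof (rule sum_mono)
      fix i assume i: "i \<in> {..<L0}"
      have "(\<Sum>j<i. prob (?F i \<inter> ?F j)) \<le> (\<Sum>j<i. p (n' + i) * p (n' + j))"
        by (rule sum_mono) (rule prob_AA, simp)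
      also have "\<dots> \<le> (\<Sum>j<L0. p (n' + i) * p (n' + j))"
        by (rule sum_mono2) (use i p_nonneg[of "n' + i"] p_nonneg in \<open>simp_all\<close>)
      finally show "(\<Sum>j<i. prob (?F i \<inter> ?F j)) \<le> (\<Sum>j<L0. p (n' + i) * p (n' + j))" .
    qed
    also have "\<dots> = x * x"
      by (simp add: x_def P_def sum_product)
    finally show ?thesis .
  qed
  ultimately have "prob (\<Union>i<L0. ?F i) \<ge> kappa / 2 * x - x * x" by simp
  moreover have "kappa / 2 * x - x * x \<ge> kappa^2 / 64"
  proof -
    have x1: "x \<ge> kappa / 16" using L0 by (simp add: x_def)
    have x2: "x \<le> kappa / 8" using xup by (simp add: x_def)
    have "x * (kappa / 2 - x) \<ge> (kappa / 16) * (kappa / 2 - kappa / 8)"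
      by (rule mult_mono) (use x1 x2 kp in linarith)+
    moreover have "kappa / 2 * x - x * x = x * (kappa / 2 - x)" by (simp add: algebra_simps)
    moreover have "(kappa / 16) * (kappa / 2 - kappa / 8) = 3 / 128 * kappa^2" by (simp add: power2_eq_square)
    moreover have "kappa^2 \<ge> 0" by simp
    ultimately show ?thesis by linarith
  qed
  moreover have "prob (\<Union>i<L0. ?F i) \<le> prob (\<Union>s\<in>{n..}. A s)"
  proof (rule finite_measure_mono)
    show "(\<Union>i<L0. ?F i) \<subseteq> (\<Union>s\<in>{n..}. A s)"
    proof (rule UN_least)
      fix i assume "i \<in> {..<L0}"
      have "n' + i \<in> {n..}" by (simp add: n'_def)
      then show "A (n' + i) \<subseteq> (\<Union>s\<in>{n..}. A s)" by (rule UN_upper)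
    qed
    show "(\<Union>s\<in>{n..}. A s) \<in> events" by (rule sets.countable_UN'') (simp_all add: A_ev)
  qed
  ultimately show ?thesis by linarith
qed

definition LS :: "'a set" where "LS = (\<Inter>n. \<Union>m\<in>{n..}. A m)"

lemma UA_ev: "(\<Union>m\<in>{n..}. A m) \<in> events"
  by (rule sets.countable_UN'') (simp_all add: A_ev)

lemma LS_pos: "prob LS > 0"
proof -
  have dec: "decseq (\<lambda>n. \<Union>m\<in>{n..}. A m)"
    by (rule decseq_SucI) (rule UN_mono, simp_all)
  have "(\<lambda>n. prob (\<Union>m\<in>{n..}. A m)) \<longlonglongrightarrow> prob (\<Inter>n. \<Union>m\<in>{n..}. A m)"
    by (rule finite_Lim_measure_decseq[OF _ dec]) (use UA_ev in blast)
  then have "prob LS \<ge> kappa^2 / 64"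
    unfolding LS_def by (rule LIMSEQ_le_const) (use block_bound in blast)
  moreover have "kappa^2 / 64 > 0" using kappa_pos by simp
  ultimately show ?thesis by linarith
qed

end


context thm5 begin

definition idx :: "nat + nat \<Rightarrow> nat" where "idx i = (case i of Inl n \<Rightarrow> n | Inr n \<Rightarrow> n)"

lemma A_in:
  assumes sa: "sigma_algebra (space M) F"
    and base: "\<And>i B. idx i \<ge> m \<Longrightarrow> {\<omega> \<in> space M. X i \<omega> \<in> B} \<in> F"
  shows "A m \<in> F"
proof -
  interpret F: sigma_algebra "space M" F by (rule sa)
  have GC: "G m \<inter> Cf m \<in> F"
    unfolding GC_eq
  proof (rule F.countable_INT')
    show "countable (Jg m)" using Jg_finite by (rule countable_finite)
    show "Jg m \<noteq> {}" by (rule Jg_ne)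
    show "(\<lambda>i. {\<omega> \<in> space M. X i \<omega> \<in> Bg m i}) ` Jg m \<subseteq> F"
    proof (rule image_subsetI)
      fix i assume "i \<in> Jg m"
      then have "idx i \<ge> m" by (auto simp: Jg_def idx_def)
      then show "{\<omega> \<in> space M. X i \<omega> \<in> Bg m i} \<in> F" by (rule base)
    qed
  qed
  have T1: "{\<omega> \<in> space M. m + c \<le> t \<longrightarrow> Z t \<omega> \<le> t - (m + N0) \<or> W t \<omega> \<le> t - (m + N0)} \<in> F" for t
  proof (cases "m + c \<le> t")
    case True
    have "{\<omega> \<in> space M. m + c \<le> t \<longrightarrow> Z t \<omega> \<le> t - (m + N0) \<or> W t \<omega> \<le> t - (m + N0)}
       = {\<omega> \<in> space M. X (Inl t) \<omega> \<in> {..t - (m + N0)}} \<union> {\<omega> \<in> space M. X (Inr t) \<omega> \<in> {..t - (m + N0)}}"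
      using True by (simp only: X_simps atMost_iff) blast
    also have "\<dots> \<in> F" using True by (intro F.Un base) (simp_all add: idx_def)
    finally show ?thesis .
  next
    case False
    then have "{\<omega> \<in> space M. m + c \<le> t \<longrightarrow> Z t \<omega> \<le> t - (m + N0) \<or> W t \<omega> \<le> t - (m + N0)} = space M"
      by blast
    then show ?thesis by (simp only: F.top)
  qed
  have T: "Tl m \<in> F" unfolding Tl_def
  proof (rule F.countable_INT)
    show "range (\<lambda>t. {\<omega> \<in> space M. m + c \<le> t \<longrightarrow> Z t \<omega> \<le> t - (m + N0) \<or> W t \<omega> \<le> t - (m + N0)}) \<subseteq> F"
      using T1 by (simp only: image_subset_iff) (intro ballI TrueI)
  qed simp
  show ?thesis unfolding A_def using GC T by (rule F.Int)
qed

definition Sig :: "nat \<Rightarrow> 'a set set" where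
  "Sig j = sigma_sets (space M) (\<Union>i\<in>{Inl j, Inr j}. {X i -` B \<inter> space M | B. B \<in> sets (count_space UNIV)})"

lemma Sig_indep: "indep_sets Sig UNIV"
  unfolding Sig_def
proof (rule indep_sets_collect_sigma)
  have "indep_sets (\<lambda>i. {X i -` B \<inter> space M | B. B \<in> sets (count_space UNIV)}) UNIV"
    using indep unfolding indep_vars_def2 X_def by auto
  moreover have "(\<Union>j\<in>UNIV. {Inl j, Inr j}) = (UNIV :: (nat + nat) set)"
    by (auto intro: sum.exhaust) (metis sum.exhaust)
  ultimately show "indep_sets (\<lambda>i. {X i -` B \<inter> space M | B. B \<in> sets (count_space UNIV)}) (\<Union>j\<in>UNIV. {Inl j, Inr j})"
    by simp
  show "Int_stable {X i -` B \<inter> space M | B. B \<in> sets (count_space UNIV)}" for i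
    unfolding Int_stable_def
  proof (intro ballI)
    fix a b assume "a \<in> {X i -` B \<inter> space M | B. B \<in> sets (count_space UNIV)}"
      "b \<in> {X i -` B \<inter> space M | B. B \<in> sets (count_space UNIV)}"
    then obtain B1 B2 where "a = X i -` B1 \<inter> space M" "b = X i -` B2 \<inter> space M" by auto
    then have "a \<inter> b = X i -` (B1 \<inter> B2) \<inter> space M" by auto
    then show "a \<inter> b \<in> {X i -` B \<inter> space M | B. B \<in> sets (count_space UNIV)}"
      by (intro CollectI exI[of _ "B1 \<inter> B2"]) simp
  qed
  show "disjoint_family_on (\<lambda>j. {Inl j, Inr j}) UNIV"
    by (auto simp: disjoint_family_on_def)
qed

lemma Sig_sa: "sigma_algebra (space M) (Sig j)"
  unfolding Sig_def by (rule sigma_algebra_sigma_sets) auto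

lemma LS_tail: "LS \<in> tail_events Sig"
  unfolding tail_events_def
proof (rule InterI, clarify)
  fix n
  let ?Sn = "sigma_sets (space M) (\<Union> (Sig ` {n..}))"
  have sa: "sigma_algebra (space M) ?Sn"
  proof (rule sigma_algebra_sigma_sets)
    show "\<Union> (Sig ` {n..}) \<subseteq> Pow (space M)"
    proof (rule subsetI)
      fix x assume "x \<in> \<Union> (Sig ` {n..})"
      then obtain j where "x \<in> Sig j" by auto
      then have "x \<in> sigma_sets (space M) (\<Union>i\<in>{Inl j, Inr j}. {X i -` B \<inter> space M | B. B \<in> sets (count_space UNIV)})"
        by (simp only: Sig_def)
      then have "x \<subseteq> space M" by (rule sigma_sets_into_sp[rotated]) auto
      then show "x \<in> Pow (space M)" by simp
    qed
  qed
  interpret Sn: sigma_algebra "space M" ?Sn by (rule sa)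
  have Am: "A m \<in> ?Sn" if m: "m \<ge> n" for m
  proof (rule A_in[OF sa])
    fix i B assume i: "idx i \<ge> m"
    have "{\<omega> \<in> space M. X i \<omega> \<in> B} = X i -` B \<inter> space M" by auto
    also have "\<dots> \<in> Sig (idx i)"
      unfolding Sig_def by (rule sigma_sets.Basic) (cases i, auto simp: idx_def)
    also have "Sig (idx i) \<subseteq> ?Sn" using i m by (intro subsetI sigma_sets.Basic) auto
    finally show "{\<omega> \<in> space M. X i \<omega> \<in> B} \<in> ?Sn" .
  qed
  have eq: "LS = (\<Inter>k\<in>{n..}. \<Union>m\<in>{k..}. A m)"
  proof
    show "LS \<subseteq> (\<Inter>k\<in>{n..}. \<Union>m\<in>{k..}. A m)" unfolding LS_def by blast
    show "(\<Inter>k\<in>{n..}. \<Union>m\<in>{k..}. A m) \<subseteq> LS"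
    proof
      fix \<omega> assume w: "\<omega> \<in> (\<Inter>k\<in>{n..}. \<Union>m\<in>{k..}. A m)"
      show "\<omega> \<in> LS" unfolding LS_def
      proof (rule InterI, clarify)
        fix k
        have "\<omega> \<in> (\<Union>m\<in>{max k n..}. A m)" using w by simp
        then show "\<omega> \<in> (\<Union>m\<in>{k..}. A m)" by auto
      qed
    qed
  qed
  show "LS \<in> ?Sn" unfolding eq
  proof (rule Sn.countable_INT')
    show "(\<lambda>k. \<Union>m\<in>{k..}. A m) ` {n..} \<subseteq> ?Sn"
    proof (rule image_subsetI)
      fix k assume k: "k \<in> {n..}"
      show "(\<Union>m\<in>{k..}. A m) \<in> ?Sn"
        by (rule Sn.countable_UN'') (use k Am in auto)
    qed
  qed auto
qed

lemma AE_LS: "AE \<omega> in M. \<omega> \<in> LS"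
proof -
  have "prob LS = 0 \<or> prob LS = 1"
    by (rule kolmogorov_0_1_law[OF Sig_sa Sig_indep LS_tail])
  with LS_pos have "prob LS = 1" by simp
  then show ?thesis by (rule AE_prob_1)
qed

end


context thm5 begin

lemma AE_landing: "AE \<omega> in M. \<forall>u. finite {s. Z s \<omega> = s + u}"
proof (subst AE_all_countable, intro allI)
  fix u
  let ?B = "\<lambda>s. {\<omega> \<in> space M. Z s \<omega> = s + u}"
  have ev: "\<And>s. ?B s \<in> events" using X_ev[of "Inl _" "{_ + u}"] by simp
  have eqp: "\<And>s. prob (?B s) = prob {\<omega> \<in> space M. Z 0 \<omega> = s + u}"
    using distZ'[of _ "{_ + u}"] by simp
  have "(\<lambda>s. prob {\<omega> \<in> space M. Z 0 \<omega> = s + u}) sums prob (\<Union>s. {\<omega> \<in> space M. Z 0 \<omega> = s + u})"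
  proof (rule finite_measure_UNION)
    show "range (\<lambda>s. {\<omega> \<in> space M. Z 0 \<omega> = s + u}) \<subseteq> events"
      using X_ev[of "Inl 0" "{_ + u}"] by auto
    show "disjoint_family (\<lambda>s. {\<omega> \<in> space M. Z 0 \<omega> = s + u})"
      by (auto simp: disjoint_family_on_def)
  qed
  then have summ: "summable (\<lambda>s. prob (?B s))" unfolding eqp by (rule sums_summable)
  have "AE \<omega> in M. eventually (\<lambda>s. \<omega> \<in> space M - ?B s) sequentially"
    by (rule borel_cantelli_AE1[OF ev _ summ]) (simp add: less_top[symmetric])
  then show "AE \<omega> in M. finite {s. Z s \<omega> = s + u}"
  proof (rule AE_mp, intro AE_I2 impI)
    fix \<omega> assume w: "\<omega> \<in> space M" and e: "eventually (\<lambda>s. \<omega> \<in> space M - ?B s) sequentially"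
    then obtain N where N: "\<And>s. s \<ge> N \<Longrightarrow> \<omega> \<in> space M - ?B s" by (auto simp: eventually_sequentially)
    have "{s. Z s \<omega> = s + u} \<subseteq> {..<N}"
    proof
      fix s assume "s \<in> {s. Z s \<omega> = s + u}"
      then show "s \<in> {..<N}" using N[of s] w by (cases "s \<ge> N") auto
    qed
    then show "finite {s. Z s \<omega> = s + u}" by (rule finite_subset) simp
  qed
qed

lemma main: "AE \<omega> in M. filterlim (\<lambda>n::nat. Lambda (\<lambda>k. Z k \<omega>) (\<lambda>k. W k \<omega>) (int n)) at_top sequentially"
  using AE_LS AE_landing AE_space
proof (eventually_elim)
  case (elim \<omega>)
  note w = elim(3)
  show ?case
  proof (rule final_lemma[where P = "\<lambda>s. \<omega> \<in> A s \<and> s \<ge> 1" and c = N0])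
    show "\<And>t. Z t \<omega> \<ge> 1" using pos[OF w] by auto
    show "infinite {s. \<omega> \<in> A s \<and> s \<ge> 1}"
      unfolding infinite_nat_iff_unbounded_le
    proof
      fix m
      have "\<omega> \<in> (\<Union>k\<in>{max m 1..}. A k)" using elim(1) unfolding LS_def by blast
      then obtain k where "k \<ge> max m 1" "\<omega> \<in> A k" by auto
      then show "\<exists>k\<ge>m. k \<in> {s. \<omega> \<in> A s \<and> s \<ge> 1}" by auto
    qed
    show "\<And>s. \<omega> \<in> A s \<and> s \<ge> 1 \<Longrightarrow> Z s \<omega> \<ge> s \<and> s \<ge> 1 \<and> (\<forall>m\<ge>s + N0. int s \<in> Tset (\<lambda>k. Z k \<omega>) (\<lambda>k. W k \<omega>) (int m))"
      using A_reach by blast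
    show "\<And>u. finite {s. Z s \<omega> = s + u}" using elim(2) by blast
  qed
qed

end

theorem theorem5:
  fixes M :: "'a measure" and Z W :: "nat \<Rightarrow> 'a \<Rightarrow> nat"
  assumes "prob_space M"
    and indep: "prob_space.indep_vars M (\<lambda>_. count_space UNIV)
                  (\<lambda>i. case i of Inl n \<Rightarrow> Z n | Inr n \<Rightarrow> W n) UNIV"
    and distZ: "\<And>n. distr M (count_space UNIV) (Z n) = distr M (count_space UNIV) (Z 0)"
    and distW: "\<And>n. distr M (count_space UNIV) (W n) = distr M (count_space UNIV) (Z 0)"
    and pos: "\<And>n \<omega>. \<omega> \<in> space M \<Longrightarrow> Z n \<omega> \<ge> 1 \<and> W n \<omega> \<ge> 1"
    and aperiodic: "Gcd {k. measure M {\<omega> \<in> space M. Z 0 \<omega> = k} > 0} = 1"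
    and infmean: "(\<integral>\<^sup>+ \<omega>. ennreal (real (Z 0 \<omega>)) \<partial>M) = \<infinity>"
    and finmin: "(\<integral>\<^sup>+ \<omega>. ennreal (real (min (Z 0 \<omega>) (W 0 \<omega>))) \<partial>M) < \<infinity>"
  shows "AE \<omega> in M. filterlim (\<lambda>n::nat. Lambda (\<lambda>k. Z k \<omega>) (\<lambda>k. W k \<omega>) (int n))
                       at_top sequentially"
proof -
  interpret thm5 M Z W
  proof (rule thm5.intro[OF assms(1)], unfold_locales)
    show "prob_space.indep_vars M (\<lambda>_. count_space UNIV) (\<lambda>i. case i of Inl n \<Rightarrow> Z n | Inr n \<Rightarrow> W n) UNIV"
      by (rule indep)
    show "\<And>n. distr M (count_space UNIV) (Z n) = distr M (count_space UNIV) (Z 0)" by (rule distZ)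
    show "\<And>n. distr M (count_space UNIV) (W n) = distr M (count_space UNIV) (Z 0)" by (rule distW)
    show "\<And>n \<omega>. \<omega> \<in> space M \<Longrightarrow> Z n \<omega> \<ge> 1 \<and> W n \<omega> \<ge> 1" by (rule pos)
    show "Gcd {k. measure M {\<omega> \<in> space M. Z 0 \<omega> = k} > 0} = 1" by (rule aperiodic)
    show "(\<integral>\<^sup>+ \<omega>. ennreal (real (Z 0 \<omega>)) \<partial>M) = \<infinity>" by (rule infmean)
    show "(\<integral>\<^sup>+ \<omega>. ennreal (real (min (Z 0 \<omega>) (W 0 \<omega>))) \<partial>M) < \<infinity>" by (rule finmin)
  qed
  show ?thesis by (rule main)
qed


end
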